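(* (i) Let $G$ be a graph, $c$ a Grundy-coloring of $G$ using $k$ colors, and $u$ a vertex with $c(u)=k$. Let $H$ be a subgraph of $G$ of minimum cardinality such that $u\in V(H)$ and the restriction of $c$ to $V(H)$ is a Grundy-coloring of $H$ with $k$ colors. Then $V(H)\subseteq B(u,k-1)\subseteq B(u,d_G(u))$. Moreover, either $V(H)\subseteq B(u,\Delta(u))$ (and hence $V(H)\subseteq V(G(u))$), or for some neighbor $w$ of $u$, $V(H)\subseteq B(w,\Delta(w))$ (and hence $V(H)\subseteq V(G(w))$). (ii) For any graph $G$, $\Gamma(G)=\max_{v\in V(G)}\Gamma(G(v))=\max_{v\in V(G)}\Gamma_{G(v)}(v)$.
   Context: Graphs are finite and simple. A Grundy-coloring of $G$ is a proper coloring with nonempty color classes $C_1,\ldots,C_k$ (color $i$ on $C_i$) such that for $i<j$ each vertex of $C_j$ has a neighbor in $C_i$; $\Gamma(G)$ is the maximum number of colors of a Grundy-coloring, and $\Gamma_G(v)$ is the maximum color of $v$ over Grundy-colorings of $G$. $d_G(v)$ is the degree and $d_G(u,v)$ the distance. $B(u,r)=\{v\in V(G): d_G(u,v)\le r\}$. For $u\in V(G)$, $\Delta(u)=\max\{d(v): v\in N(u),\ d(v)\le d(u)\}$, and $G(u)$ is the induced subgraph $G[B(u,\Delta(u))]$. *)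

theory Defs
  imports Main
begin

definition graph :: "'a set \<Rightarrow> ('a \<Rightarrow> 'a \<Rightarrow> bool) \<Rightarrow> bool" where
  "graph V E \<longleftrightarrow> finite V \<and>
     (\<forall>x y. E x y \<longrightarrow> x \<in> V \<and> y \<in> V \<and> x \<noteq> y \<and> E y x)"

definition subgraph :: "'a set \<Rightarrow> ('a \<Rightarrow> 'a \<Rightarrow> bool) \<Rightarrow> 'a set \<Rightarrow> ('a \<Rightarrow> 'a \<Rightarrow> bool) \<Rightarrow> bool" where
  "subgraph VH EH V E \<longleftrightarrow> graph VH EH \<and> VH \<subseteq> V \<and> (\<forall>x y. EH x y \<longrightarrow> E x y)"

definition induced :: "('a \<Rightarrow> 'a \<Rightarrow> bool) \<Rightarrow> 'a set \<Rightarrow> 'a \<Rightarrow> 'a \<Rightarrow> bool" where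
  "induced E S = (\<lambda>x y. E x y \<and> x \<in> S \<and> y \<in> S)"

definition deg :: "'a set \<Rightarrow> ('a \<Rightarrow> 'a \<Rightarrow> bool) \<Rightarrow> 'a \<Rightarrow> nat" where
  "deg V E v = card {w \<in> V. E v w}"

inductive walk :: "'a set \<Rightarrow> ('a \<Rightarrow> 'a \<Rightarrow> bool) \<Rightarrow> nat \<Rightarrow> 'a \<Rightarrow> 'a \<Rightarrow> bool"
  for V E where
  walk0: "u \<in> V \<Longrightarrow> walk V E 0 u u"
| walkS: "E u v \<Longrightarrow> walk V E n v w \<Longrightarrow> walk V E (Suc n) u w"

definition ball :: "'a set \<Rightarrow> ('a \<Rightarrow> 'a \<Rightarrow> bool) \<Rightarrow> 'a \<Rightarrow> nat \<Rightarrow> 'a set" where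
  "ball V E u r = {v \<in> V. \<exists>n\<le>r. walk V E n u v}"

definition Delta :: "'a set \<Rightarrow> ('a \<Rightarrow> 'a \<Rightarrow> bool) \<Rightarrow> 'a \<Rightarrow> nat" where
  "Delta V E u = Max (insert 0 {deg V E v | v. v \<in> V \<and> E u v \<and> deg V E v \<le> deg V E u})"

definition locV :: "'a set \<Rightarrow> ('a \<Rightarrow> 'a \<Rightarrow> bool) \<Rightarrow> 'a \<Rightarrow> 'a set" where
  "locV V E u = ball V E u (Delta V E u)"

definition locE :: "'a set \<Rightarrow> ('a \<Rightarrow> 'a \<Rightarrow> bool) \<Rightarrow> 'a \<Rightarrow> 'a \<Rightarrow> 'a \<Rightarrow> bool" where
  "locE V E u = induced E (locV V E u)"

definition grundy_coloring :: "'a set \<Rightarrow> ('a \<Rightarrow> 'a \<Rightarrow> bool) \<Rightarrow> ('a \<Rightarrow> nat) \<Rightarrow> nat \<Rightarrow> bool" where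
  "grundy_coloring V E c k \<longleftrightarrow>
     c ` V = {1..k} \<and>
     (\<forall>x\<in>V. \<forall>y\<in>V. E x y \<longrightarrow> c x \<noteq> c y) \<and>
     (\<forall>x\<in>V. \<forall>i. 1 \<le> i \<and> i < c x \<longrightarrow> (\<exists>y\<in>V. E x y \<and> c y = i))"

definition grundy_number :: "'a set \<Rightarrow> ('a \<Rightarrow> 'a \<Rightarrow> bool) \<Rightarrow> nat" where
  "grundy_number V E = Max {k. \<exists>c. grundy_coloring V E c k}"

definition grundy_vertex :: "'a set \<Rightarrow> ('a \<Rightarrow> 'a \<Rightarrow> bool) \<Rightarrow> 'a \<Rightarrow> nat" where
  "grundy_vertex V E v = Max {c v | c k. grundy_coloring V E c k}"

end

theory Submission
  imports Defs
begin

definition symirr :: "('a \<Rightarrow> 'a \<Rightarrow> bool) \<Rightarrow> bool" where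
  "symirr E \<longleftrightarrow> (\<forall>x y. E x y \<longrightarrow> E y x \<and> x \<noteq> y)"

lemma graph_symirr: "graph V E \<Longrightarrow> symirr E"
  by (auto simp: graph_def symirr_def)

lemma gc_induced: "grundy_coloring S (induced E S) c k \<longleftrightarrow> grundy_coloring S E c k"
  unfolding grundy_coloring_def induced_def by auto

definition pg :: "'a set \<Rightarrow> ('a \<Rightarrow> 'a \<Rightarrow> bool) \<Rightarrow> ('a \<Rightarrow> nat) \<Rightarrow> bool" where
  "pg S E c \<longleftrightarrow> (\<forall>x\<in>S. 1 \<le> c x) \<and> (\<forall>x\<in>S. \<forall>y\<in>S. E x y \<longrightarrow> c x \<noteq> c y) \<and>
     (\<forall>x\<in>S. \<forall>i. 1 \<le> i \<and> i < c x \<longrightarrow> (\<exists>y\<in>S. E x y \<and> c y = i))"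

lemma gc_col: "grundy_coloring S E c k \<Longrightarrow> x \<in> S \<Longrightarrow> 1 \<le> c x \<and> c x \<le> k"
proof -
  assume a: "grundy_coloring S E c k" "x \<in> S"
  then have "c x \<in> {1..k}" unfolding grundy_coloring_def by blast
  thus ?thesis by simp
qed

lemma gc_pg: "grundy_coloring S E c k \<Longrightarrow> pg S E c"
  using gc_col[of S E c k] unfolding pg_def grundy_coloring_def by blast

lemma pg_gc:
  assumes "finite S" "pg S E c"
  shows "grundy_coloring S E c (Max (insert 0 (c ` S)))"
proof -
  let ?M = "Max (insert 0 (c ` S))"
  have fin: "finite (insert 0 (c ` S))" using assms by simp
  have "c ` S = {1..?M}"
  proof
    show "c ` S \<subseteq> {1..?M}" using assms(2) Max_ge[OF fin] by (auto simp: pg_def)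
    show "{1..?M} \<subseteq> c ` S"
    proof
      fix i assume i: "i \<in> {1..?M}"
      have "?M \<in> insert 0 (c ` S)" using Max_in[OF fin] by simp
      moreover have "?M \<noteq> 0" using i by simp
      ultimately obtain x where x: "x \<in> S" "c x = ?M" by auto
      show "i \<in> c ` S"
      proof (cases "i = c x")
        case True thus ?thesis using x by (metis image_eqI)
      next
        case False then have "1 \<le> i \<and> i < c x" using i x by auto
        then obtain y where "y \<in> S" "c y = i" using assms(2) x unfolding pg_def by blast
        thus ?thesis by auto
      qed
    qed
  qed
  thus ?thesis using assms(2) unfolding grundy_coloring_def pg_def by blast
qed

lemma pg_ext:
  assumes "finite T" "finite S" "symirr E" "pg S E c"
  shows "\<exists>c'. pg (S \<union> T) E c' \<and> (\<forall>x\<in>S. c' x = c x)"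
  using assms(1)
proof (induction T rule: finite_induct)
  case empty thus ?case using assms(4) by auto
next
  case (insert x T)
  then obtain c1 where c1: "pg (S \<union> T) E c1" "\<forall>y\<in>S. c1 y = c y" by blast
  show ?case
  proof (cases "x \<in> S")
    case True
    then have "S \<union> insert x T = S \<union> T" by auto
    thus ?thesis using c1 by auto
  next
    case False
    have xn: "x \<notin> S \<union> T" using False insert(2) by auto
    define N where "N = c1 ` {y \<in> S \<union> T. E x y}"
    have finN: "finite N" unfolding N_def using assms(2) insert(1) by simp
    define P where "P = (\<lambda>m::nat. 1 \<le> m \<and> m \<notin> N)"
    have "\<forall>n\<in>N. n \<le> Max (insert 0 N)" using Max_ge[of "insert 0 N"] finN by simp
    then have "P (Suc (Max (insert 0 N)))" unfolding P_def by fastforce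
    define m where "m = (LEAST m. P m)"
    have Pm: "P m" unfolding m_def by (rule LeastI) fact
    have lt: "\<And>i. i < m \<Longrightarrow> \<not> P i" unfolding m_def by (rule not_less_Least)
    define c2 where "c2 = c1(x := m)"
    have eq: "\<And>y. y \<in> S \<union> T \<Longrightarrow> c2 y = c1 y" unfolding c2_def using xn by auto
    have cx: "c2 x = m" unfolding c2_def by simp
    have "pg (S \<union> insert x T) E c2"
      unfolding pg_def
    proof (intro conjI ballI allI impI)
      fix y assume "y \<in> S \<union> insert x T"
      then show "1 \<le> c2 y" using Pm c1(1) eq cx unfolding P_def pg_def by auto
    next
      fix y z assume y: "y \<in> S \<union> insert x T" and z: "z \<in> S \<union> insert x T" and e: "E y z"
      have ne: "y \<noteq> z" "E z y" using e assms(3) unfolding symirr_def by auto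
      consider "y = x" "z \<in> S \<union> T" | "z = x" "y \<in> S \<union> T" | "y \<in> S \<union> T" "z \<in> S \<union> T"
        using y z ne(1) by auto
      then show "c2 y \<noteq> c2 z"
      proof cases
        case 1 then have "c1 z \<in> N" unfolding N_def using e by auto
        then show ?thesis using 1 Pm eq cx unfolding P_def by auto
      next
        case 2 then have "c1 y \<in> N" unfolding N_def using ne(2) by auto
        then show ?thesis using 2 Pm eq cx unfolding P_def by auto
      next
        case 3 then show ?thesis using c1(1) e eq unfolding pg_def by auto
      qed
    next
      fix y i assume y: "y \<in> S \<union> insert x T" and i: "1 \<le> i \<and> i < c2 y"
      show "\<exists>z\<in>S \<union> insert x T. E y z \<and> c2 z = i"
      proof (cases "y = x")
        case True
        then have "i < m" using i cx by simp
        then have "i \<in> N" using lt[of i] i unfolding P_def by auto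
        then obtain z where "z \<in> S \<union> T" "E x z" "c1 z = i" unfolding N_def by auto
        then show ?thesis using True eq by auto
      next
        case False
        then have "y \<in> S \<union> T" "1 \<le> i \<and> i < c1 y" using y i eq by auto
        then obtain z where "z \<in> S \<union> T" "E y z" "c1 z = i" using c1(1) unfolding pg_def by blast
        then show ?thesis using eq by auto
      qed
    qed
    moreover have "\<forall>y\<in>S. c2 y = c y" using c1(2) eq by auto
    ultimately show ?thesis by blast
  qed
qed

lemma gc_extend:
  assumes "finite V" "symirr E" "S \<subseteq> V" "pg S E c"
  shows "\<exists>c' K. grundy_coloring V E c' K \<and> (\<forall>x\<in>S. c' x = c x)"
proof -
  from pg_ext[OF assms(1) finite_subset[OF assms(3,1)] assms(2,4)]
  obtain c' where "pg (S \<union> V) E c'" "\<forall>x\<in>S. c' x = c x" by blast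
  moreover have "S \<union> V = V" using assms(3) by auto
  ultimately show ?thesis using pg_gc[OF assms(1)] by metis
qed

lemma gc_exists: "finite S \<Longrightarrow> symirr E \<Longrightarrow> \<exists>c k. grundy_coloring S E c k"
  using gc_extend[of S E "{}" "\<lambda>_. 0"] by (auto simp: pg_def)

lemma gc_bound:
  assumes "finite S" "grundy_coloring S E c k" shows "k \<le> card S"
proof -
  have "card (c ` S) \<le> card S" by (rule card_image_le[OF assms(1)])
  moreover have "c ` S = {1..k}" using assms(2) unfolding grundy_coloring_def by blast
  ultimately show ?thesis by simp
qed

lemma gn_fin: "finite S \<Longrightarrow> finite {k. \<exists>c. grundy_coloring S E c k}"
  by (rule finite_subset[of _ "{..card S}"]) (auto dest: gc_bound)

lemma gn_ge: "finite S \<Longrightarrow> grundy_coloring S E c k \<Longrightarrow> k \<le> grundy_number S E"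
  unfolding grundy_number_def by (rule Max_ge[OF gn_fin]) auto

lemma gn_ex: "finite S \<Longrightarrow> symirr E \<Longrightarrow> \<exists>c. grundy_coloring S E c (grundy_number S E)"
proof -
  assume a: "finite S" "symirr E"
  have "{k. \<exists>c. grundy_coloring S E c k} \<noteq> {}" using gc_exists[OF a] by auto
  from Max_in[OF gn_fin[OF a(1)] this] show ?thesis unfolding grundy_number_def by simp
qed

lemma gv_fin: "finite S \<Longrightarrow> v \<in> S \<Longrightarrow> finite {c v | c k. grundy_coloring S E c k}"
  by (rule finite_subset[of _ "{..card S}"]) (force dest: gc_bound gc_col, simp)

lemma gv_ge: "finite S \<Longrightarrow> v \<in> S \<Longrightarrow> grundy_coloring S E c k \<Longrightarrow> c v \<le> grundy_vertex S E v"
  unfolding grundy_vertex_def by (rule Max_ge[OF gv_fin]) auto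

lemma gv_ex: "finite S \<Longrightarrow> v \<in> S \<Longrightarrow> symirr E \<Longrightarrow>
   \<exists>c k. grundy_coloring S E c k \<and> c v = grundy_vertex S E v"
proof -
  assume a: "finite S" "v \<in> S" "symirr E"
  have "{c v | c k. grundy_coloring S E c k} \<noteq> {}" using gc_exists[OF a(1,3)] by auto
  from Max_in[OF gv_fin[OF a(1,2)] this] show ?thesis unfolding grundy_vertex_def by auto
qed

lemma walk_end: "walk V E n x y \<Longrightarrow> y \<in> V"
  by (induction rule: walk.induct) auto
lemma walk_mono: "walk V E n x y \<Longrightarrow> V \<subseteq> V' \<Longrightarrow> (\<forall>a b. E a b \<longrightarrow> E' a b) \<Longrightarrow> walk V' E' n x y"
proof (induction rule: walk.induct)
  case (walk0 u) thus ?case by (simp add: subset_iff walk.walk0)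
next
  case (walkS u v n w) thus ?case by (meson walk.walkS)
qed
lemma walk_ball: "walk V E n x y \<Longrightarrow> n \<le> r \<Longrightarrow> y \<in> ball V E x r"
proof -
  assume a: "walk V E n x y" "n \<le> r"
  have "y \<in> V" using walk_end[OF a(1)] .
  thus ?thesis unfolding ball_def using a by blast
qed
lemma walk_snoc: "walk V E n x y \<Longrightarrow> E y z \<Longrightarrow> z \<in> V \<Longrightarrow> walk V E (Suc n) x z"
  by (induction rule: walk.induct) (auto intro: walk.intros)

lemma ball_mono: "r \<le> s \<Longrightarrow> ball V E x r \<subseteq> ball V E x s"
  unfolding ball_def using le_trans by blast

inductive_set desc :: "'a set \<Rightarrow> ('a \<Rightarrow> 'a \<Rightarrow> bool) \<Rightarrow> ('a \<Rightarrow> nat) \<Rightarrow> 'a \<Rightarrow> 'a set"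
  for V E c x where
  d0: "x \<in> desc V E c x"
| dS: "y \<in> desc V E c x \<Longrightarrow> z \<in> V \<Longrightarrow> E y z \<Longrightarrow> c z < c y \<Longrightarrow> z \<in> desc V E c x"

lemma desc_sub: "y \<in> desc V E c x \<Longrightarrow> x \<in> V \<Longrightarrow> y \<in> V"
  by (induction rule: desc.induct) auto

lemma desc_le: "y \<in> desc V E c x \<Longrightarrow> c y \<le> c x"
  by (induction rule: desc.induct) auto

lemma desc_walk: "y \<in> desc V E c x \<Longrightarrow> x \<in> V \<Longrightarrow> \<exists>n. walk V E n x y \<and> n + c y \<le> c x"
proof (induction rule: desc.induct)
  case d0 thus ?case by (intro exI[of _ 0]) (auto intro: walk.intros)
next
  case (dS y z)
  then obtain n where n: "walk V E n x y" "n + c y \<le> c x" by blast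
  have "walk V E (Suc n) x z" using walk_snoc[OF n(1) dS.hyps(3,2)] .
  moreover have "Suc n + c z \<le> c x" using n(2) dS.hyps(4) by linarith
  ultimately show ?case by blast
qed

lemma desc_trans: "z \<in> desc V E c y \<Longrightarrow> y \<in> desc V E c x \<Longrightarrow> z \<in> desc V E c x"
proof (induction rule: desc.induct)
  case d0 thus ?case by simp
next
  case (dS y' z) thus ?case by (meson desc.dS)
qed

lemma desc_first: "y \<in> desc V E c x \<Longrightarrow> y = x \<or> (\<exists>z. z \<in> V \<and> E x z \<and> c z < c x \<and> y \<in> desc V E c z)"
proof (induction rule: desc.induct)
  case d0 show ?case by simp
next
  case (dS y z)
  show ?case
  proof (cases "y = x")
    case True thus ?thesis using dS by (auto intro: desc.d0)
  next
    case False
    then obtain w where w: "w \<in> V" "E x w" "c w < c x" "y \<in> desc V E c w" using dS.IH by blast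
    have "z \<in> desc V E c w" using desc.dS[OF w(4) dS.hyps(2,3,4)] .
    thus ?thesis using w by blast
  qed
qed

lemma pg_desc:
  assumes "\<forall>y\<in>V. 1 \<le> c y" "\<forall>a\<in>V. \<forall>b\<in>V. E a b \<longrightarrow> c a \<noteq> c b"
    "\<forall>y\<in>V. \<forall>i. 1 \<le> i \<and> i < c y \<longrightarrow> (\<exists>z\<in>V. E y z \<and> c z = i)" "x \<in> V"
  shows "pg (desc V E c x) E c"
  unfolding pg_def
proof (intro conjI ballI allI impI)
  fix y assume "y \<in> desc V E c x" 
  then have "y \<in> V" using desc_sub[OF _ assms(4)] by simp
  thus "1 \<le> c y" using assms(1) by simp
next
  fix y z assume a: "y \<in> desc V E c x" "z \<in> desc V E c x" "E y z"
  have "y \<in> V" "z \<in> V" using desc_sub[OF _ assms(4)] a(1,2) by simp_all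
  thus "c y \<noteq> c z" using assms(2) a(3) by simp
next
  fix y i assume y: "y \<in> desc V E c x" and i: "1 \<le> i \<and> i < c y"
  have "y \<in> V" using desc_sub[OF _ assms(4)] y by simp
  then obtain z where z: "z \<in> V" "E y z" "c z = i" using assms(3) i by blast
  have "z \<in> desc V E c x" using desc.dS[OF y z(1,2)] z(3) i by simp
  thus "\<exists>z\<in>desc V E c x. E y z \<and> c z = i" using z by blast
qed

lemma deg_ge:
  assumes "finite V" "A \<subseteq> c ` {w \<in> V. E x w}" shows "card A \<le> deg V E x"
proof -
  have f: "finite {w \<in> V. E x w}" using assms(1) by simp
  have "card A \<le> card (c ` {w \<in> V. E x w})" using card_mono[OF finite_imageI[OF f] assms(2)] .
  also have "\<dots> \<le> card {w \<in> V. E x w}" by (rule card_image_le[OF f])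
  finally show ?thesis unfolding deg_def .
qed

lemma Delta_ge:
  assumes "finite V" "v \<in> V" "E u v" "deg V E v \<le> deg V E u"
  shows "deg V E v \<le> Delta V E u"
proof -
  have "{deg V E v |v. v \<in> V \<and> E u v \<and> deg V E v \<le> deg V E u} \<subseteq> deg V E ` V" by auto
  then have "finite (insert 0 {deg V E v |v. v \<in> V \<and> E u v \<and> deg V E v \<le> deg V E u})"
    using assms(1) finite_subset by auto
  then show ?thesis unfolding Delta_def by (rule Max_ge) (use assms in auto)
qed

lemma locV_sub: "locV V E v \<subseteq> V"
  unfolding locV_def ball_def by auto

lemma loc_conclude:
  assumes "graph V E" "z \<in> V" "S \<subseteq> locV V E z" "pg S E c" "z \<in> S"
  shows "c z \<le> grundy_vertex (locV V E z) (locE V E z) z"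
proof -
  have fV: "finite V" using assms(1) graph_def by auto
  have fL: "finite (locV V E z)" using finite_subset[OF locV_sub fV] .
  obtain c' K where c': "grundy_coloring (locV V E z) E c' K" "\<forall>x\<in>S. c' x = c x"
    using gc_extend[OF fL graph_symirr[OF assms(1)] assms(3,4)] by blast
  have "grundy_coloring (locV V E z) (locE V E z) c' K"
    unfolding locE_def gc_induced by (rule c'(1))
  from gv_ge[OF fL _ this, of z] show ?thesis using c'(2) assms(3,5) by auto
qed

lemma gc_facts:
  assumes "grundy_coloring V E c k"
  shows "\<forall>y\<in>V. 1 \<le> c y \<and> c y \<le> k" "\<forall>a\<in>V. \<forall>b\<in>V. E a b \<longrightarrow> c a \<noteq> c b"
    "\<forall>y\<in>V. \<forall>i. 1 \<le> i \<and> i < c y \<longrightarrow> (\<exists>z\<in>V. E y z \<and> c z = i)"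
  using gc_col[OF assms] assms unfolding grundy_coloring_def by blast+

lemma deg_lower:
  assumes "finite V" "grundy_coloring V E c k" "u \<in> V" "c u = k"
  shows "k - 1 \<le> deg V E u"
proof -
  have "{1..k-1} \<subseteq> c ` {w \<in> V. E u w}"
  proof
    fix i assume "i \<in> {1..k-1}"
    then have "1 \<le> i \<and> i < c u" using assms(4) by auto
    then obtain z where "z \<in> V" "E u z" "c z = i" using gc_facts(3)[OF assms(2)] assms(3) by blast
    thus "i \<in> c ` {w \<in> V. E u w}" by blast
  qed
  from deg_ge[of V _ c E u, OF assms(1) this] show ?thesis by simp
qed

lemma deg_lower2:
  assumes "finite V" "symirr E" "grundy_coloring V E c k" "u \<in> V" "c u = k" "v \<in> V" "E u v" "c v = k - 1" "2 \<le> k"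
  shows "k - 1 \<le> deg V E v"
proof -
  have "insert k {1..k-2} \<subseteq> c ` {w \<in> V. E v w}"
  proof
    fix i assume i: "i \<in> insert k {1..k-2}"
    show "i \<in> c ` {w \<in> V. E v w}"
    proof (cases "i = k")
      case True
      have "E v u" using assms(2,7) unfolding symirr_def by blast
      thus ?thesis using True assms(4,5) by blast
    next
      case False
      then have "1 \<le> i \<and> i < c v" using i assms(8,9) by auto
      then obtain z where "z \<in> V" "E v z" "c z = i" using gc_facts(3)[OF assms(3)] assms(6) by blast
      thus ?thesis by blast
    qed
  qed
  from deg_ge[of V _ c E v, OF assms(1) this] show ?thesis using assms(9) by simp
qed

lemma inj_nbrs:
  assumes "finite V" "grundy_coloring V E c k" "u \<in> V" "c u = k" "deg V E u = k - 1"
    "z \<in> V" "E u z" "v \<in> V" "E u v" "c z = c v"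
  shows "z = v"
proof -
  let ?N = "{w \<in> V. E u w}"
  have fN: "finite ?N" using assms(1) by simp
  have "c ` ?N = {1..k-1}"
  proof
    show "c ` ?N \<subseteq> {1..k-1}"
    proof
      fix j assume "j \<in> c ` ?N"
      then obtain w where w: "w \<in> V" "E u w" "c w = j" by blast
      have "1 \<le> c w \<and> c w \<le> k" using gc_facts(1)[OF assms(2)] w(1) by blast
      moreover have "c u \<noteq> c w" using gc_facts(2)[OF assms(2)] w(1,2) assms(3) by blast
      ultimately show "j \<in> {1..k-1}" using w(3) assms(4) by auto
    qed
  next
    show "{1..k-1} \<subseteq> c ` ?N"
    proof
      fix i assume "i \<in> {1..k-1}"
      then have "1 \<le> i \<and> i < c u" using assms(4) by auto
      then obtain z where "z \<in> V" "E u z" "c z = i" using gc_facts(3)[OF assms(2)] assms(3) by blast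
      thus "i \<in> c ` ?N" by blast
    qed
  qed
  then have "card (c ` ?N) = card ?N" using assms(5) unfolding deg_def by simp
  then have "inj_on c ?N" using eq_card_imp_inj_on[OF fN] by blast
  thus ?thesis using assms(6-10) unfolding inj_on_def by blast
qed

lemma part1:
  assumes G: "graph V E" and gc: "grundy_coloring V E c k" and u: "u \<in> V" "c u = k"
   and sub: "subgraph VH EH V E" and uH: "u \<in> VH" and gcH: "grundy_coloring VH EH c k"
   and min: "\<forall>VH' EH'. subgraph VH' EH' V E \<and> u \<in> VH' \<and> grundy_coloring VH' EH' c k \<longrightarrow> card VH \<le> card VH'"
  shows "VH \<subseteq> ball V E u (k - 1) \<and> ball V E u (k - 1) \<subseteq> ball V E u (deg V E u) \<and>
     (VH \<subseteq> ball V E u (Delta V E u) \<or> (\<exists>w. E u w \<and> VH \<subseteq> ball V E w (Delta V E w)))"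
proof -
  have finV: "finite V" using G unfolding graph_def by blast
  have sE: "symirr E" using graph_symirr[OF G] .
  have gH: "graph VH EH" "VH \<subseteq> V" "\<forall>x y. EH x y \<longrightarrow> E x y" using sub unfolding subgraph_def by blast+
  have finH: "finite VH" using gH(1) unfolding graph_def by blast
  have sEH: "symirr EH" using graph_symirr[OF gH(1)] .
  note colV = gc_facts(1)[OF gc] and propV = gc_facts(2)[OF gc] and grV = gc_facts(3)[OF gc]
  note colH = gc_facts(1)[OF gcH] and grH = gc_facts(3)[OF gcH]
  have propH: "\<forall>a\<in>VH. \<forall>b\<in>VH. EH a b \<longrightarrow> c a \<noteq> c b" using propV gH(2,3) by blast
  define S where "S = desc VH EH c u"
  have SH: "S \<subseteq> VH" using desc_sub[OF _ uH] unfolding S_def by blast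
  have pgS: "pg S EH c" unfolding S_def
    by (rule pg_desc) (use colH propH grH uH in auto)
  have uS: "u \<in> S" unfolding S_def by (rule desc.d0)
  have cS: "c ` S = {1..k}"
  proof
    show "c ` S \<subseteq> {1..k}" using SH colH by auto
  next
    show "{1..k} \<subseteq> c ` S"
    proof
      fix i assume i: "i \<in> {1..k}"
      show "i \<in> c ` S"
      proof (cases "i = k")
        case True thus ?thesis using uS u(2) by blast
      next
        case False
        then have "1 \<le> i \<and> i < c u" using i u(2) by auto
        then obtain z where z: "z \<in> VH" "EH u z" "c z = i" using grH uH by blast
        have "z \<in> S" unfolding S_def using desc.dS[OF desc.d0[where V=VH and E=EH and c=c and x=u] z(1,2)] z(3) \<open>1 \<le> i \<and> i < c u\<close> by simp
        thus ?thesis using z(3) by blast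
      qed
    qed
  qed
  have gcS: "grundy_coloring S (induced EH S) c k"
  proof -
    have "(\<forall>x\<in>S. \<forall>y\<in>S. EH x y \<longrightarrow> c x \<noteq> c y)" "(\<forall>x\<in>S. \<forall>i. 1 \<le> i \<and> i < c x \<longrightarrow> (\<exists>y\<in>S. EH x y \<and> c y = i))"
      using pgS unfolding pg_def by blast+
    with cS show ?thesis unfolding gc_induced unfolding grundy_coloring_def by blast
  qed
  have subS: "subgraph S (induced EH S) V E"
  proof -
    have "finite S" using finite_subset[OF SH finH] .
    moreover have "\<forall>x y. EH x y \<longrightarrow> EH y x \<and> x \<noteq> y" using sEH unfolding symirr_def .
    ultimately show ?thesis unfolding subgraph_def graph_def induced_def using SH gH(2,3) by blast
  qed
  have "card VH \<le> card S" using min[rule_format, of S "induced EH S"] subS gcS uS by simp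
  then have "card S = card VH" using card_mono[OF finH SH] by simp
  then have SeqVH: "S = VH" using card_subset_eq[OF finH SH] by simp
  have ballk: "VH \<subseteq> ball V E u (k - 1)"
  proof
    fix y assume y: "y \<in> VH"
    then have yS: "y \<in> S" using SeqVH by simp
    obtain n where n: "walk VH EH n u y" "n + c y \<le> c u" using desc_walk[OF yS[unfolded S_def] uH] by blast
    have "1 \<le> c y" using colH y by blast
    then have "n \<le> k - 1" using n(2) u(2) by linarith
    moreover have "walk V E n u y" using walk_mono[OF n(1) gH(2,3)] .
    ultimately show "y \<in> ball V E u (k - 1)" using walk_ball[of V E n u y "k - 1"] by simp
  qed
  have degu: "k - 1 \<le> deg V E u" using deg_lower[OF finV gc u] .
  have p2: "ball V E u (k - 1) \<subseteq> ball V E u (deg V E u)" using ball_mono[OF degu] .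
  have p3: "VH \<subseteq> ball V E u (Delta V E u) \<or> (\<exists>w. E u w \<and> VH \<subseteq> ball V E w (Delta V E w))"
  proof (cases "k - 1 \<le> Delta V E u")
    case True
    have "VH \<subseteq> ball V E u (Delta V E u)" using subset_trans[OF ballk ball_mono[OF True]] .
    then show ?thesis by (rule disjI1)
  next
    case False
    then have k2: "2 \<le> k" by linarith
    then have "1 \<le> k - 1 \<and> k - 1 < c u" using u(2) by linarith
    then obtain v where v: "v \<in> V" "E u v" "c v = k - 1" using grV u(1) by blast
    have Evu: "E v u" using sE v(2) unfolding symirr_def by blast
    have degv: "k - 1 \<le> deg V E v" using deg_lower2[OF finV sE gc u v k2] .
    have "\<not> deg V E v \<le> deg V E u"
    proof
      assume "deg V E v \<le> deg V E u"
      then have "deg V E v \<le> Delta V E u" using Delta_ge[where V=V and v=v and E=E and u=u, OF finV v(1,2)] by blast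
      thus False using degv False by linarith
    qed
    then have "deg V E u \<le> deg V E v" by linarith
    then have Dv: "deg V E u \<le> Delta V E v" using Delta_ge[where V=V and v=u and E=E and u=v, OF finV u(1) Evu] by blast
    have "VH \<subseteq> ball V E v (Delta V E v)"
    proof
      fix y assume y: "y \<in> VH"
      then have yS: "y \<in> desc VH EH c u" using SeqVH S_def by simp
      have cy: "1 \<le> c y" using colH y by blast
      from desc_first[OF yS]
      show "y \<in> ball V E v (Delta V E v)"
      proof
        assume "y = u"
        have "walk V E 1 v u" using walk.walkS[where E=E, OF Evu walk.walk0[where E=E, OF u(1)]] by simp
        moreover have "1 \<le> Delta V E v" using Dv degu k2 by linarith
        ultimately show ?thesis using walk_ball[of V E 1 v u "Delta V E v"] \<open>y = u\<close> by simp
      next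
        assume "\<exists>z. z \<in> VH \<and> EH u z \<and> c z < c u \<and> y \<in> desc VH EH c z"
        then obtain z where z: "z \<in> VH" "EH u z" "c z < c u" "y \<in> desc VH EH c z" by blast
        obtain n where n: "walk VH EH n z y" "n + c y \<le> c z" using desc_walk[OF z(4) z(1)] by blast
        have wz: "walk V E n z y" using walk_mono[OF n(1) gH(2,3)] .
        have zV: "z \<in> V" and Euz: "E u z" using z(1,2) gH(2,3) by blast+
        show ?thesis
        proof (cases "z = v")
          case True
          then have "c z = k - 1" using v(3) by simp
          then have "n \<le> Delta V E v" using n(2) cy Dv degu by linarith
          thus ?thesis using wz True walk_ball[of V E n v y "Delta V E v"] by simp
        next
          case False
          have w2: "walk V E (Suc (Suc n)) v y" using walk.walkS[where E=E, OF Evu walk.walkS[where E=E, OF Euz wz]] .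
          have "Suc (Suc n) \<le> Delta V E v"
          proof (cases "c z \<le> k - 2")
            case True thus ?thesis using n(2) cy Dv degu k2 by linarith
          next
            case False
            then have czk: "c z = k - 1" using z(3) u(2) by linarith
            show ?thesis
            proof (cases "k \<le> deg V E u")
              case True thus ?thesis using n(2) cy Dv czk by linarith
            next
              case False
              then have du: "deg V E u = k - 1" using degu by linarith
              have "z = v" using inj_nbrs[OF finV gc u du zV Euz v(1,2)] czk v(3) by simp
              thus ?thesis using \<open>z \<noteq> v\<close> by simp
            qed
          qed
          thus ?thesis using w2 walk_ball[of V E "Suc (Suc n)" v y "Delta V E v"] by simp
        qed
      qed
    qed
    thus ?thesis using v(2) by blast
  qed
  show ?thesis using ballk p2 p3 by blast
qed

lemma part2_local:
  assumes G: "graph V E" and gc: "grundy_coloring V E c k" and u: "u \<in> V" "c u = k"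
  shows "\<exists>v\<in>V. k \<le> grundy_vertex (locV V E v) (locE V E v) v"
proof -
  have finV: "finite V" using G unfolding graph_def by blast
  have sE: "symirr E" using graph_symirr[OF G] .
  note colV = gc_facts(1)[OF gc] and propV = gc_facts(2)[OF gc] and grV = gc_facts(3)[OF gc]
  have colV1: "\<forall>y\<in>V. 1 \<le> c y" using colV by blast
  have degu: "k - 1 \<le> deg V E u" using deg_lower[OF finV gc u] .
  show ?thesis
  proof (cases "k - 1 \<le> Delta V E u")
    case True
    define S where "S = desc V E c u"
    have pgS: "pg S E c" unfolding S_def using pg_desc[OF colV1 propV grV u(1)] .
    have uS: "u \<in> S" unfolding S_def by (rule desc.d0)
    have "S \<subseteq> locV V E u"
    proof
      fix y assume y: "y \<in> S"
      obtain n where n: "walk V E n u y" "n + c y \<le> c u" using desc_walk[OF y[unfolded S_def] u(1)] by blast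
      have "y \<in> V" using desc_sub[OF y[unfolded S_def] u(1)] .
      then have "1 \<le> c y" using colV1 by blast
      then have "n \<le> Delta V E u" using n(2) u(2) True by linarith
      thus "y \<in> locV V E u" unfolding locV_def using walk_ball[of V E n u y "Delta V E u"] n(1) by simp
    qed
    from loc_conclude[OF G u(1) this pgS uS] have "k \<le> grundy_vertex (locV V E u) (locE V E u) u"
      using u(2) by simp
    thus ?thesis using u(1) by blast
  next
    case False
    then have k2: "2 \<le> k" by linarith
    then have "1 \<le> k - 1 \<and> k - 1 < c u" using u(2) by linarith
    then obtain v where v: "v \<in> V" "E u v" "c v = k - 1" using grV u(1) by blast
    have Evu: "E v u" using sE v(2) unfolding symirr_def by blast
    have uv: "u \<noteq> v" using sE v(2) unfolding symirr_def by blast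
    have degv: "k - 1 \<le> deg V E v" using deg_lower2[OF finV sE gc u v k2] .
    have "\<not> deg V E v \<le> deg V E u"
    proof
      assume "deg V E v \<le> deg V E u"
      then have "deg V E v \<le> Delta V E u" using Delta_ge[where V=V and v=v and E=E and u=u, OF finV v(1,2)] by blast
      thus False using degv False by linarith
    qed
    then have "deg V E u \<le> deg V E v" by linarith
    then have Dv: "deg V E u \<le> Delta V E v" using Delta_ge[where V=V and v=u and E=E and u=v, OF finV u(1) Evu] by blast
    define L where "L = {y. \<exists>z. z \<in> V \<and> E u z \<and> c z < k - 1 \<and> y \<in> desc V E c z}"
    define S where "S = desc V E c v \<union> {u} \<union> L"
    define c' where "c' = c(v := k, u := k - 1)"
    have c'u: "c' u = k - 1" unfolding c'_def by simp
    have c'v: "c' v = k" unfolding c'_def using uv by simp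
    have c'o: "\<And>y. y \<noteq> u \<Longrightarrow> y \<noteq> v \<Longrightarrow> c' y = c y" unfolding c'_def by simp
    have SF: "\<And>y. y \<in> S \<Longrightarrow> y \<in> V \<and> (y = u \<or> y = v \<or> c y \<le> k - 2)"
    proof -
      fix y assume y: "y \<in> S"
      show "y \<in> V \<and> (y = u \<or> y = v \<or> c y \<le> k - 2)"
      proof (cases "y \<in> desc V E c v")
        case True
        have yV: "y \<in> V" using desc_sub[OF True v(1)] .
        from desc_first[OF True] have "y = v \<or> c y \<le> k - 2"
        proof
          assume "\<exists>z. z \<in> V \<and> E v z \<and> c z < c v \<and> y \<in> desc V E c z"
          then obtain z where "c z < c v" "y \<in> desc V E c z" by blast
          then have "c y < c v" using desc_le[of y V E c z] by simp
          then have "c y \<le> k - 2" using v(3) by linarith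
          thus ?thesis by simp
        qed simp
        thus ?thesis using yV by blast
      next
        case False
        then have "y = u \<or> y \<in> L" using y unfolding S_def by blast
        thus ?thesis
        proof
          assume "y = u" thus ?thesis using u(1) by simp
        next
          assume "y \<in> L"
          then obtain z where z: "z \<in> V" "E u z" "c z < k - 1" "y \<in> desc V E c z" unfolding L_def by blast
          have "y \<in> V" using desc_sub[OF z(4) z(1)] .
          moreover have "c y \<le> c z" using desc_le[OF z(4)] .
          moreover have "c y \<le> k - 2" using \<open>c y \<le> c z\<close> z(3) by linarith
          ultimately show ?thesis by simp
        qed
      qed
    qed
    have CL: "\<And>y w. y \<in> S \<Longrightarrow> y \<noteq> u \<Longrightarrow> w \<in> V \<Longrightarrow> E y w \<Longrightarrow> c w < c y \<Longrightarrow> w \<in> S"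
    proof -
      fix y w assume y: "y \<in> S" "y \<noteq> u" and w: "w \<in> V" "E y w" "c w < c y"
      show "w \<in> S"
      proof (cases "y \<in> desc V E c v")
        case True
        then have "w \<in> desc V E c v" using desc.dS[where E=E, OF True w] by simp
        thus ?thesis unfolding S_def by blast
      next
        case False
        then have "y \<in> L" using y unfolding S_def by blast
        then obtain z where z: "z \<in> V" "E u z" "c z < k - 1" "y \<in> desc V E c z" unfolding L_def by blast
        have "w \<in> desc V E c z" using desc.dS[where E=E, OF z(4) w] by simp
        then have "w \<in> L" unfolding L_def using z(1-3) by blast
        thus ?thesis unfolding S_def by blast
      qed
    qed
    have uS: "u \<in> S" and vS: "v \<in> S" unfolding S_def using desc.d0[where V=V and E=E and c=c and x=v] by blast+
    have pgS: "pg S E c'"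
      unfolding pg_def
    proof (intro conjI ballI allI impI)
      fix y assume y: "y \<in> S"
      show "1 \<le> c' y"
      proof (cases "y = u \<or> y = v")
        case True thus ?thesis using c'u c'v k2 by auto
      next
        case False
        then have "c' y = c y" using c'o by blast
        thus ?thesis using colV1 SF[OF y] by simp
      qed
    next
      fix x y assume x: "x \<in> S" and y: "y \<in> S" and e: "E x y"
      have xy: "x \<noteq> y" using sE e unfolding symirr_def by blast
      have eyx: "E y x" using sE e unfolding symirr_def by blast
      show "c' x \<noteq> c' y"
      proof (cases "x = u \<or> x = v")
        case True
        show ?thesis
        proof (cases "y = u \<or> y = v")
          case True
          thus ?thesis using \<open>x = u \<or> x = v\<close> xy c'u c'v k2 by auto
        next
          case False
          then have "c' y = c y" "c y \<le> k - 2" using c'o SF[OF y] by auto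
          thus ?thesis using \<open>x = u \<or> x = v\<close> c'u c'v k2 by auto
        qed
      next
        case False
        then have cx: "c' x = c x" "c x \<le> k - 2" "x \<in> V" using c'o SF[OF x] by auto
        show ?thesis
        proof (cases "y = u \<or> y = v")
          case True
          thus ?thesis using cx c'u c'v k2 by auto
        next
          case False
          then have "c' y = c y" "y \<in> V" using c'o SF[OF y] by auto
          moreover have "c x \<noteq> c y" using propV cx(3) \<open>y \<in> V\<close> e by blast
          ultimately show ?thesis using cx(1) by simp
        qed
      qed
    next
      fix x i assume x: "x \<in> S" and i: "1 \<le> i \<and> i < c' x"
      show "\<exists>y\<in>S. E x y \<and> c' y = i"
      proof (cases "x = u")
        case True
        then have "i < k - 1" using i c'u by simp
        then have "1 \<le> i \<and> i < c u" using i u(2) by linarith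
        then obtain z where z: "z \<in> V" "E u z" "c z = i" using grV u(1) by blast
        have "z \<in> desc V E c z" by (rule desc.d0)
        then have "z \<in> L" unfolding L_def using z \<open>i < k - 1\<close> by blast
        then have "z \<in> S" unfolding S_def by blast
        moreover have "z \<noteq> u" "z \<noteq> v" using z(3) \<open>i < k - 1\<close> u(2) v(3) by auto
        ultimately show ?thesis using z True c'o by auto
      next
        case xu: False
        show ?thesis
        proof (cases "x = v")
          case True
          then have ik: "i < k" using i c'v by simp
          show ?thesis
          proof (cases "i = k - 1")
            case True thus ?thesis using uS Evu c'u \<open>x = v\<close> by blast
          next
            case False
            then have "1 \<le> i \<and> i < c v" using i ik v(3) by linarith
            then obtain z where z: "z \<in> V" "E v z" "c z = i" using grV v(1) by blast
            have "z \<in> desc V E c v"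
              using desc.dS[where E=E, OF desc.d0[where V=V and E=E and c=c and x=v] z(1,2)] z(3) \<open>1 \<le> i \<and> i < c v\<close> by simp
            then have "z \<in> S" unfolding S_def by blast
            moreover have "z \<noteq> u" "z \<noteq> v" using z(3) \<open>1 \<le> i \<and> i < c v\<close> u(2) v(3) by auto
            ultimately show ?thesis using z True c'o \<open>x = v\<close> by auto
          qed
        next
          case xv: False
          have xV: "x \<in> V" "c x \<le> k - 2" using SF[OF x] xu xv by auto
          have "c' x = c x" using c'o xu xv by blast
          then have "1 \<le> i \<and> i < c x" using i by simp
          then obtain z where z: "z \<in> V" "E x z" "c z = i" using grV xV(1) by blast
          have "z \<in> S" using CL[OF x xu z(1,2)] z(3) \<open>1 \<le> i \<and> i < c x\<close> by simp
          moreover have "z \<noteq> u" "z \<noteq> v" using z(3) \<open>1 \<le> i \<and> i < c x\<close> xV(2) u(2) v(3) k2 by auto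
          ultimately show ?thesis using z c'o by auto
        qed
      qed
    qed
    have "S \<subseteq> locV V E v"
    proof
      fix y assume y: "y \<in> S"
      have "\<exists>n. walk V E n v y \<and> n \<le> k - 1"
      proof (cases "y \<in> desc V E c v")
        case True
        obtain n where n: "walk V E n v y" "n + c y \<le> c v" using desc_walk[OF True v(1)] by blast
        have "1 \<le> c y" using colV1 SF[OF y] by blast
        then have "n \<le> k - 1" using n(2) v(3) by linarith
        thus ?thesis using n(1) by blast
      next
        case False
        then have "y = u \<or> y \<in> L" using y unfolding S_def by blast
        thus ?thesis
        proof
          assume "y = u"
          have "walk V E 1 v u" using walk.walkS[where E=E, OF Evu walk.walk0[where E=E, OF u(1)]] by simp
          thus ?thesis using \<open>y = u\<close> k2 by (intro exI[of _ 1]) simp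
        next
          assume "y \<in> L"
          then obtain z where z: "z \<in> V" "E u z" "c z < k - 1" "y \<in> desc V E c z" unfolding L_def by blast
          obtain n where n: "walk V E n z y" "n + c y \<le> c z" using desc_walk[OF z(4) z(1)] by blast
          have "1 \<le> c y" using colV1 SF[OF y] by blast
          then have "Suc (Suc n) \<le> k - 1" using n(2) z(3) by linarith
          moreover have "walk V E (Suc (Suc n)) v y"
            using walk.walkS[where E=E, OF Evu walk.walkS[where E=E, OF z(2) n(1)]] .
          ultimately show ?thesis by blast
        qed
      qed
      then obtain n where n: "walk V E n v y" "n \<le> k - 1" by blast
      have "n \<le> Delta V E v" using n(2) Dv degu by linarith
      thus "y \<in> locV V E v" unfolding locV_def using walk_ball[of V E n v y "Delta V E v"] n(1) by simp
    qed
    from loc_conclude[OF G v(1) this pgS vS] have "k \<le> grundy_vertex (locV V E v) (locE V E v) v"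
      using c'v by simp
    thus ?thesis using v(1) by blast
  qed
qed

lemma locV_fin: "finite V \<Longrightarrow> finite (locV V E v)"
  by (rule finite_subset[OF locV_sub])

lemma locV_mem: "v \<in> V \<Longrightarrow> v \<in> locV V E v"
  unfolding locV_def using walk_ball[of V E 0 v v "Delta V E v"] walk.walk0[of v V E] by simp

lemma gc_loc_iff: "grundy_coloring (locV V E v) (locE V E v) c k \<longleftrightarrow> grundy_coloring (locV V E v) E c k"
  unfolding locE_def by (rule gc_induced)

lemma part2:
  assumes G: "graph V E" and ne: "V \<noteq> {}"
  shows "grundy_number V E = Max {grundy_number (locV V E v) (locE V E v) | v. v \<in> V} \<and>
      grundy_number V E = Max {grundy_vertex (locV V E v) (locE V E v) v | v. v \<in> V}"
proof -
  have finV: "finite V" using G unfolding graph_def by blast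
  have sE: "symirr E" using graph_symirr[OF G] .
  define g where "g = grundy_number V E"
  obtain c where c: "grundy_coloring V E c g" using gn_ex[OF finV sE] unfolding g_def by blast
  obtain x where x: "x \<in> V" using ne by blast
  have cV: "c ` V = {1..g}" using c unfolding grundy_coloring_def by (rule conjunct1)
  have "1 \<le> g" using gc_col[OF c x] by linarith
  then have "g \<in> c ` V" unfolding cV by simp
  then obtain u where u: "u \<in> V" "c u = g" by blast
  obtain v0 where v0: "v0 \<in> V" "g \<le> grundy_vertex (locV V E v0) (locE V E v0) v0"
    using part2_local[OF G c u] by blast
  have sLE: "\<And>v. symirr (locE V E v)" using sE unfolding symirr_def locE_def induced_def by blast
  have A: "\<And>v. v \<in> V \<Longrightarrow> grundy_vertex (locV V E v) (locE V E v) v \<le> grundy_number (locV V E v) (locE V E v)"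
  proof -
    fix v assume v: "v \<in> V"
    obtain c1 k1 where c1: "grundy_coloring (locV V E v) (locE V E v) c1 k1"
        "c1 v = grundy_vertex (locV V E v) (locE V E v) v"
      using gv_ex[OF locV_fin[where E=E and v=v, OF finV] locV_mem[OF v] sLE] by blast
    have "c1 v \<le> k1" using gc_col[OF c1(1) locV_mem[OF v]] by simp
    also have "k1 \<le> grundy_number (locV V E v) (locE V E v)" using gn_ge[OF locV_fin[where E=E and v=v, OF finV] c1(1)] .
    finally show "grundy_vertex (locV V E v) (locE V E v) v \<le> grundy_number (locV V E v) (locE V E v)"
      using c1(2) by simp
  qed
  have B: "\<And>v. v \<in> V \<Longrightarrow> grundy_number (locV V E v) (locE V E v) \<le> g"
  proof -
    fix v assume v: "v \<in> V"
    define K where "K = grundy_number (locV V E v) (locE V E v)"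
    obtain c1 where c1: "grundy_coloring (locV V E v) (locE V E v) c1 K"
      using gn_ex[OF locV_fin[where E=E and v=v, OF finV] sLE[of v]] unfolding K_def by (elim exE)
    then have c1': "grundy_coloring (locV V E v) E c1 K" unfolding locE_def by (simp only: gc_induced)
    obtain c2 K2 where c2: "grundy_coloring V E c2 K2" "\<forall>y\<in>locV V E v. c2 y = c1 y"
      using gc_extend[OF finV sE locV_sub gc_pg[OF c1']] by (elim exE conjE)
    have "K \<le> K2"
    proof (cases "K = 0")
      case True thus ?thesis by simp
    next
      case False
      have cL: "c1 ` locV V E v = {1..K}" using c1' unfolding grundy_coloring_def by (rule conjunct1)
      have "K \<in> c1 ` locV V E v" unfolding cL using False by simp
      then obtain y where y: "y \<in> locV V E v" "c1 y = K" by blast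
      have "y \<in> V" using locV_sub y(1) by (rule subsetD)
      then have "c2 y \<le> K2" using gc_col[OF c2(1)] by simp
      thus ?thesis using c2(2) y by simp
    qed
    also have "K2 \<le> g" unfolding g_def using gn_ge[OF finV c2(1)] .
    finally show "K \<le> g" unfolding K_def .
  qed
  have f1: "finite {grundy_number (locV V E v) (locE V E v) | v. v \<in> V}" using finV by simp
  have f2: "finite {grundy_vertex (locV V E v) (locE V E v) v | v. v \<in> V}" using finV by simp
  have e1: "grundy_number (locV V E v0) (locE V E v0) = g" using A[OF v0(1)] B[OF v0(1)] v0(2) by linarith
  have e2: "grundy_vertex (locV V E v0) (locE V E v0) v0 = g" using A[OF v0(1)] B[OF v0(1)] v0(2) by linarith
  have "Max {grundy_number (locV V E v) (locE V E v) | v. v \<in> V} = g"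
  proof (rule Max_eqI[OF f1])
    fix y assume "y \<in> {grundy_number (locV V E v) (locE V E v) | v. v \<in> V}"
    then obtain v where "v \<in> V" "y = grundy_number (locV V E v) (locE V E v)" by blast
    thus "y \<le> g" using B by simp
  next
    show "g \<in> {grundy_number (locV V E v) (locE V E v) | v. v \<in> V}" using e1 v0(1) by force
  qed
  moreover have "Max {grundy_vertex (locV V E v) (locE V E v) v | v. v \<in> V} = g"
  proof (rule Max_eqI[OF f2])
    fix y assume "y \<in> {grundy_vertex (locV V E v) (locE V E v) v | v. v \<in> V}"
    then obtain v where "v \<in> V" "y = grundy_vertex (locV V E v) (locE V E v) v" by blast
    thus "y \<le> g" using A[of v] B[of v] by simp
  next
    show "g \<in> {grundy_vertex (locV V E v) (locE V E v) v | v. v \<in> V}" using e2 v0(1) by force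
  qed
  ultimately show ?thesis unfolding g_def by simp
qed

theorem proposition8:
  shows
  "(\<forall>(V::'a set) E c k u VH EH.
      graph V E \<and> grundy_coloring V E c k \<and> u \<in> V \<and> c u = k \<and>
      subgraph VH EH V E \<and> u \<in> VH \<and> grundy_coloring VH EH c k \<and>
      (\<forall>VH' EH'. subgraph VH' EH' V E \<and> u \<in> VH' \<and> grundy_coloring VH' EH' c k
                  \<longrightarrow> card VH \<le> card VH')
      \<longrightarrow> VH \<subseteq> ball V E u (k - 1) \<and>
          ball V E u (k - 1) \<subseteq> ball V E u (deg V E u) \<and>
          (VH \<subseteq> ball V E u (Delta V E u) \<or>
           (\<exists>w. E u w \<and> VH \<subseteq> ball V E w (Delta V E w))))
   \<and>
   (\<forall>(V::'a set) E. graph V E \<and> V \<noteq> {} \<longrightarrow>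
      grundy_number V E = Max {grundy_number (locV V E v) (locE V E v) | v. v \<in> V} \<and>
      grundy_number V E = Max {grundy_vertex (locV V E v) (locE V E v) v | v. v \<in> V})"
proof (intro conjI allI impI)
  fix V :: "'a set" and E c k u VH EH
  assume a: "graph V E \<and> grundy_coloring V E c k \<and> u \<in> V \<and> c u = k \<and>
      subgraph VH EH V E \<and> u \<in> VH \<and> grundy_coloring VH EH c k \<and>
      (\<forall>VH' EH'. subgraph VH' EH' V E \<and> u \<in> VH' \<and> grundy_coloring VH' EH' c k
                  \<longrightarrow> card VH \<le> card VH')"
  have r: "VH \<subseteq> ball V E u (k - 1) \<and> ball V E u (k - 1) \<subseteq> ball V E u (deg V E u) \<and>
     (VH \<subseteq> ball V E u (Delta V E u) \<or> (\<exists>w. E u w \<and> VH \<subseteq> ball V E w (Delta V E w)))"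
  proof -
    note a1 = a[THEN conjunct1]
    note a2 = a[THEN conjunct2, THEN conjunct1]
    note a3 = a[THEN conjunct2, THEN conjunct2, THEN conjunct1]
    note a4 = a[THEN conjunct2, THEN conjunct2, THEN conjunct2, THEN conjunct1]
    note a5 = a[THEN conjunct2, THEN conjunct2, THEN conjunct2, THEN conjunct2, THEN conjunct1]
    note a6 = a[THEN conjunct2, THEN conjunct2, THEN conjunct2, THEN conjunct2, THEN conjunct2, THEN conjunct1]
    note a7 = a[THEN conjunct2, THEN conjunct2, THEN conjunct2, THEN conjunct2, THEN conjunct2, THEN conjunct2, THEN conjunct1]
    note a8 = a[THEN conjunct2, THEN conjunct2, THEN conjunct2, THEN conjunct2, THEN conjunct2, THEN conjunct2, THEN conjunct2]
    show ?thesis by (rule part1[OF a1 a2 a3 a4 a5 a6 a7 a8])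
  qed
  show "VH \<subseteq> ball V E u (k - 1)" using r by (rule conjunct1)
  show "ball V E u (k - 1) \<subseteq> ball V E u (deg V E u)" using r[THEN conjunct2] by (rule conjunct1)
  show "VH \<subseteq> ball V E u (Delta V E u) \<or> (\<exists>w. E u w \<and> VH \<subseteq> ball V E w (Delta V E w))"
    using r[THEN conjunct2] by (rule conjunct2)
next
  fix V :: "'a set" and E
  assume "graph V E \<and> V \<noteq> {}"
  then have g: "graph V E" "V \<noteq> {}" by simp_all
  note r = part2[OF g]
  show "grundy_number V E = Max {grundy_number (locV V E v) (locE V E v) | v. v \<in> V}"
    using r by (rule conjunct1)
  show "grundy_number V E = Max {grundy_vertex (locV V E v) (locE V E v) v | v. v \<in> V}"
    using r by (rule conjunct2)
qed

end
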